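(* Let $0<\alpha<\frac12$. There is a constant $M_{\alpha}$ such that for all $(\sigma,\tau)\in\mathcal{C}_{\alpha}(\mathbb{R})\oplus\mathcal{C}_{\alpha+\frac12}(\mathbb{R})$, $$|D\tau|_{\alpha}+|C\sigma|_{\alpha+\frac12}\leq M_{\alpha}\,m(q_l,q_r)\left[|\tau|_{\alpha+\frac12}+|\sigma|_{\alpha}\right].$$
   Context: For $\gamma\ge0$, $\mathcal{C}_{\gamma}(\mathbb{R})$ is the Banach space of continuous $f:\mathbb{R}\to\mathbb{C}$ with $|f|_{\gamma}=\sup_{x\in\mathbb{R}}(1+|x|)^{\gamma}|f(x)|<\infty$. Setting: fix $k_1>0$. For $\star\in\{l,r\}$ let $k_{2;\star}\ge k_1$, $d_\star>0$, $y_\star\in\mathbb{R}$, and $q_\star(t)=(k_{2;\star}^2-k_1^2)\chi_{[y_\star-d_\star,y_\star+d_\star]}(t)$ for $t\in\mathbb{R}$; assume $2d_\star\sqrt{k_{2;\star}^2-k_1^2}\neq n\pi$ for every positive integer $n$. For $x,y\in\mathbb{R}^2$ and $\delta>0$ let $w^\star_\delta(\cdot;y)$ be the unique $L^2(\mathbb{R}^2)$ solution of $(\Delta_x+k_1^2+q_\star(x_2)+i\delta)w^\star_\delta(x;y)=-\frac{i}{4}q_\star(x_2)H^{(1)}_0(\sqrt{k_1^2+i\delta}\,|x-y|)$ (principal square root), and let $w^\star(x;y)=\lim_{\delta\to0^+}w^\star_\delta(x;y)$ (limiting absorption), so that $\frac i4H^{(1)}_0(k_1|x-y|)+w^\star(x;y)$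 is the outgoing fundamental solution of $\Delta+k_1^2+q_\star(x_2)$ on $\mathbb{R}^2$. Define kernels on $\mathbb{R}^2$ by $k_D(s,t)=w^r((0,s);(0,t))-w^l((0,s);(0,t))$ and $k_C(s,t)=\big[\partial_{x_1}\partial_{y_1}w^l-\partial_{x_1}\partial_{y_1}w^r\big]((0,s);(0,t))$ (derivatives in the first coordinates $x_1$ of $x$ and $y_1$ of $y$), and operators $D\tau(s)=\int_{\mathbb{R}}k_D(s,t)\tau(t)\,dt$, $C\sigma(s)=\int_{\mathbb{R}}k_C(s,t)\sigma(t)\,dt$. The quantity $m(q_l,q_r)\ge0$ is a continuous function of $\|q_l\|_{L^\infty},\|q_r\|_{L^\infty},\|q_l-q_r\|_{L^\infty}$ with $m(q,q)=0$, for which the kernels satisfy: $|k_D(s,t)|\le m(q_l,q_r)(1+|s|+|t|)^{-1/2}$; and, with $d>0$ chosen so that $\operatorname{supp}q_l\cup\operatorname{supp}q_r\subset(-d,d)$, $\epsilon>0$, $B_a=[-a,a]\times[-a,a]$ and $\varphi\in C^\infty_c(B_{d+2\epsilon})$ equal to $1$ on $B_{d+\epsilon}$, one has $|(1-\varphi(s,t))k_C(s,t)|\le m(q_l,q_r)(1+|s|+|t|)^{-3/2}$ while $\varphi k_C$ has at most a logarithmic singularity $|\varphi(s,t)k_C(s,t)|\le m(q_l,q_r)(1+|\log|s-t||)$. *)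

theory Defs
  imports "HOL-Analysis.Analysis"
begin

definition Cw :: "real \<Rightarrow> (real \<Rightarrow> complex) set" where
  "Cw \<gamma> = {f. continuous_on UNIV f \<and>
        bdd_above (range (\<lambda>x. (1 + \<bar>x\<bar>) powr \<gamma> * cmod (f x)))}"

definition wnorm :: "real \<Rightarrow> (real \<Rightarrow> complex) \<Rightarrow> real" where
  "wnorm \<gamma> f = (SUP x. (1 + \<bar>x\<bar>) powr \<gamma> * cmod (f x))"

definition intop :: "(real \<Rightarrow> real \<Rightarrow> complex) \<Rightarrow> (real \<Rightarrow> complex) \<Rightarrow> real \<Rightarrow> complex" where
  "intop k f = (\<lambda>s. LINT t|lborel. k s t * f t)"

definition Bsq :: "real \<Rightarrow> (real \<times> real) set" where
  "Bsq a = {-a..a} \<times> {-a..a}"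

end

theory Submission
  imports Defs
begin


lemma key_half:
  fixes a p \<beta> :: real
  assumes a: "a > 0" and p: "p \<ge> 0" and b: "\<beta> < 1" and pb: "p + \<beta> > 1"
  shows "(\<integral>\<^sup>+x. ennreal (a powr (-p) * x powr (-\<beta>)) * indicator {0..a} x
            + ennreal (x powr (-p-\<beta>)) * indicator {a..} x \<partial>lborel)
         = ennreal (a powr (1-p-\<beta>) * (1/(1-\<beta>) + 1/(p+\<beta>-1)))"
proof -
  have h1: "((\<lambda>x. a powr (-p) * x powr (-\<beta>)) has_integral (a powr (-p) * (a powr (-\<beta>+1) / (-\<beta>+1)))) {0..a}"
    using has_integral_powr_from_0[of "-\<beta>" a] b a by (intro has_integral_mult_right) auto
  have h2: "((\<lambda>x. x powr (-p-\<beta>)) has_integral -(a powr ((-p-\<beta>)+1)) / ((-p-\<beta>)+1)) {a..}"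
    using has_integral_powr_to_inf[of "-p-\<beta>" a] pb a by auto
  have i1: "(\<integral>\<^sup>+x. ennreal (a powr (-p) * x powr (-\<beta>)) * indicator {0..a} x \<partial>lborel)
      = ennreal (a powr (-p) * (a powr (-\<beta>+1) / (-\<beta>+1)))"
    by (rule nn_integral_has_integral_lebesgue'[OF _ h1]) auto
  have i2: "(\<integral>\<^sup>+x. ennreal (x powr (-p-\<beta>)) * indicator {a..} x \<partial>lborel)
      = ennreal (-(a powr ((-p-\<beta>)+1)) / ((-p-\<beta>)+1))"
    by (rule nn_integral_has_integral_lebesgue'[OF _ h2]) auto
  have e1: "a powr (-p) * (a powr (-\<beta>+1) / (-\<beta>+1)) = a powr (1-p-\<beta>) * (1/(1-\<beta>))"
    using a b by (simp add: powr_add[symmetric] field_simps)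
  have e2: "-(a powr ((-p-\<beta>)+1)) / ((-p-\<beta>)+1) = a powr (1-p-\<beta>) * (1/(p+\<beta>-1))"
    using a pb by (simp add: field_simps)
  have "(\<integral>\<^sup>+x. ennreal (a powr (-p) * x powr (-\<beta>)) * indicator {0..a} x
            + ennreal (x powr (-p-\<beta>)) * indicator {a..} x \<partial>lborel)
     = (\<integral>\<^sup>+x. ennreal (a powr (-p) * x powr (-\<beta>)) * indicator {0..a} x \<partial>lborel)
       + (\<integral>\<^sup>+x. ennreal (x powr (-p-\<beta>)) * indicator {a..} x \<partial>lborel)"
    by (rule nn_integral_add) auto
  also have "\<dots> = ennreal (a powr (1-p-\<beta>) * (1/(1-\<beta>))) + ennreal (a powr (1-p-\<beta>) * (1/(p+\<beta>-1)))"
    by (simp only: i1 i2 e1 e2)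
  also have "\<dots> = ennreal (a powr (1-p-\<beta>) * (1/(1-\<beta>)) + a powr (1-p-\<beta>) * (1/(p+\<beta>-1)))"
    using b pb by (intro ennreal_plus[symmetric]) auto
  finally show ?thesis by (simp add: distrib_left)
qed

lemma key_pt:
  fixes a p \<beta> x :: real
  assumes a: "a > 0" and p: "p \<ge> 0" and x: "x > 0"
  shows "(a + x) powr (-p) * x powr (-\<beta>) \<le> a powr (-p) * x powr (-\<beta>) * indicator {0..a} x
            + x powr (-p-\<beta>) * indicator {a..} x"
proof (cases "x \<le> a")
  case True
  have "(a + x) powr (-p) \<le> a powr (-p)" using a x p by (intro powr_mono2') auto
  then have "(a + x) powr (-p) * x powr (-\<beta>) \<le> a powr (-p) * x powr (-\<beta>)"
    by (intro mult_right_mono) auto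
  moreover have "0 \<le> x powr (-p-\<beta>) * indicator {a..} x" by simp
  moreover have "a powr (-p) * x powr (-\<beta>) * indicator {0..a} x = a powr (-p) * x powr (-\<beta>)" using True x by simp
  ultimately show ?thesis by linarith
next
  case False
  have "(a + x) powr (-p) \<le> x powr (-p)" using a x p by (intro powr_mono2') auto
  then have "(a + x) powr (-p) * x powr (-\<beta>) \<le> x powr (-p) * x powr (-\<beta>)"
    by (intro mult_right_mono) auto
  also have "\<dots> = x powr (-p-\<beta>)" using x by (simp add: powr_add[symmetric])
  finally show ?thesis using False x a by (auto simp: indicator_def)
qed

lemma key:
  fixes a p \<beta> :: real
  assumes a: "a > 0" and p: "p \<ge> 0" and b: "\<beta> < 1" and pb: "p + \<beta> > 1"
  shows "(\<integral>\<^sup>+t. ennreal ((a + \<bar>t\<bar>) powr (-p) * \<bar>t\<bar> powr (-\<beta>)) \<partial>lborel)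
         \<le> ennreal (2 * (a powr (1-p-\<beta>) * (1/(1-\<beta>) + 1/(p+\<beta>-1))))"
proof -
  define G where "G x = ennreal (a powr (-p) * x powr (-\<beta>)) * indicator {0..a} x
            + ennreal (x powr (-p-\<beta>)) * indicator {a..} x" for x :: real
  have Gm: "G \<in> borel_measurable borel" unfolding G_def by measurable
  have pt: "ennreal ((a + \<bar>t\<bar>) powr (-p) * \<bar>t\<bar> powr (-\<beta>)) \<le> G t + G (-t)" for t
  proof -
    have "ennreal ((a + \<bar>t\<bar>) powr (-p) * \<bar>t\<bar> powr (-\<beta>)) \<le> G \<bar>t\<bar>"
    proof (cases "t = 0")
      case True then show ?thesis by simp
    next
      case False
      have "(a + \<bar>t\<bar>) powr (-p) * \<bar>t\<bar> powr (-\<beta>) \<le> a powr (-p) * \<bar>t\<bar> powr (-\<beta>) * indicator {0..a} \<bar>t\<bar>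
            + \<bar>t\<bar> powr (-p-\<beta>) * indicator {a..} \<bar>t\<bar>"
        using key_pt[OF a p, of "\<bar>t\<bar>" \<beta>] False by auto
      moreover have "G \<bar>t\<bar> = ennreal (a powr (-p) * \<bar>t\<bar> powr (-\<beta>) * indicator {0..a} \<bar>t\<bar>
            + \<bar>t\<bar> powr (-p-\<beta>) * indicator {a..} \<bar>t\<bar>)"
        unfolding G_def by (simp add: indicator_def ennreal_plus)
      ultimately show ?thesis by (metis ennreal_leI)
    qed
    moreover have "G \<bar>t\<bar> \<le> G t + G (-t)"
      by (cases "t \<ge> 0") (auto intro: add_increasing add_increasing2)
    ultimately show ?thesis by (rule order_trans)
  qed
  have "(\<integral>\<^sup>+t. ennreal ((a + \<bar>t\<bar>) powr (-p) * \<bar>t\<bar> powr (-\<beta>)) \<partial>lborel)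
        \<le> (\<integral>\<^sup>+t. G t + G (-t) \<partial>lborel)"
    by (rule nn_integral_mono) (use pt in auto)
  also have "\<dots> = (\<integral>\<^sup>+t. G t \<partial>lborel) + (\<integral>\<^sup>+t. G (-t) \<partial>lborel)"
    using Gm by (intro nn_integral_add) auto
  also have "(\<integral>\<^sup>+t. G (-t) \<partial>lborel) = (\<integral>\<^sup>+t. G t \<partial>lborel)"
    using nn_integral_real_affine[OF Gm, of "-1" 0] by simp
  also have "(\<integral>\<^sup>+t. G t \<partial>lborel) = ennreal (a powr (1-p-\<beta>) * (1/(1-\<beta>) + 1/(p+\<beta>-1)))"
    unfolding G_def by (rule key_half[OF a p b pb])
  also have "\<dots> + \<dots> = ennreal (2 * (a powr (1-p-\<beta>) * (1/(1-\<beta>) + 1/(p+\<beta>-1))))"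
    using b pb by (subst ennreal_plus[symmetric]) auto
  finally show ?thesis .
qed



lemma norm_int_le:
  fixes f :: "real \<Rightarrow> complex"
  assumes f: "f \<in> borel_measurable lborel" and le: "AE t in lborel. norm (f t) \<le> g t"
    and I: "(\<integral>\<^sup>+t. ennreal (g t) \<partial>lborel) \<le> ennreal B" and B: "0 \<le> B"
  shows "norm (integral\<^sup>L lborel f) \<le> B"
proof -
  have n: "(\<integral>\<^sup>+t. ennreal (norm (f t)) \<partial>lborel) \<le> ennreal B"
    using nn_integral_mono_AE[of "\<lambda>t. ennreal (norm (f t))" "\<lambda>t. ennreal (g t)" lborel] le I
    by (smt (verit, ccfv_SIG) ennreal_leI eventually_mono order_trans)
  have int: "integrable lborel f"
    using f n by (intro integrableI_bounded) (auto simp: top_unique intro: le_less_trans)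
  have "ennreal (norm (integral\<^sup>L lborel f)) \<le> ennreal B"
    using integral_norm_bound_ennreal[OF int] n by (rule order_trans)
  then show ?thesis using B by simp
qed



lemma log_bound:
  fixes L :: real assumes L: "L > 0"
  shows "\<exists>c\<ge>0. \<forall>u. 0 < u \<longrightarrow> u \<le> L \<longrightarrow> 1 + \<bar>ln u\<bar> \<le> c * ((L + u) powr (-1) * u powr (-1/2))"
proof (intro exI[of _ "2 * L * (2 + L * sqrt L)"] conjI allI impI)
  show "0 \<le> 2 * L * (2 + L * sqrt L)" using L by simp
  fix u :: real assume u: "0 < u" "u \<le> L"
  have su: "sqrt u > 0" using u by simp
  define x where "x = 1 / sqrt u"
  have x0: "x > 0" using su x_def by simp
  have p: "u powr (-1/2) = x" using u unfolding x_def
    by (simp add: powr_minus_divide powr_half_sqrt[symmetric] powr_minus)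
  have l1: "1 + \<bar>ln u\<bar> \<le> 2 * x + L"
  proof (cases "u \<le> 1")
    case True
    have a1: "ln x \<le> x - 1" using x0 by (intro ln_le_minus_one) auto
    have a2: "ln x = - ln u / 2" using u unfolding x_def by (simp add: ln_div ln_sqrt)
    have a3: "ln u \<le> 0" using True u by simp
    show ?thesis using a1 a2 a3 L by linarith
  next
    case False
    have "ln u \<le> u - 1" using u by (intro ln_le_minus_one) auto
    moreover have "ln u \<ge> 0" using False by simp
    ultimately show ?thesis using False u x0 by linarith
  qed
  have "sqrt u \<le> sqrt L" using u by simp
  then have "L * sqrt u \<le> L * sqrt L" using L by (intro mult_left_mono) auto
  then have "L \<le> L * sqrt L * x" using su unfolding x_def by (simp add: le_divide_eq)
  then have l2: "1 + \<bar>ln u\<bar> \<le> (2 + L * sqrt L) * x" using l1 by (simp add: distrib_right)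
  have q: "(L + u) powr (-1) = 1 / (L + u)" using u L by (simp add: powr_minus_divide)
  have "1 \<le> 2 * L * (1 / (L + u))" using u L by (simp add: field_simps)
  then have "(2 + L * sqrt L) * x \<le> (2 + L * sqrt L) * x * (2 * L * (1 / (L + u)))"
    using x0 L mult_left_mono[of 1 "2*L*(1/(L+u))" "(2 + L * sqrt L) * x"] by simp
  with l2 p q show "1 + \<bar>ln u\<bar> \<le> 2 * L * (2 + L * sqrt L) * ((L + u) powr (-1) * u powr (-1/2))"
    by (simp add: ac_simps)
qed

lemma near_int:
  fixes L s :: real assumes L: "L > 0"
  shows "(\<integral>\<^sup>+t. ennreal ((L + \<bar>s - t\<bar>) powr (-1) * \<bar>s - t\<bar> powr (-1/2)) \<partial>lborel)
     \<le> ennreal (2 * (L powr (-1/2) * 4))"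
proof -
  define f where "f x = ennreal ((L + \<bar>x\<bar>) powr (-1) * \<bar>x\<bar> powr (-1/2))" for x :: real
  have fm: "f \<in> borel_measurable borel" unfolding f_def by measurable
  have e: "(\<integral>\<^sup>+t. f t \<partial>lborel) = (\<integral>\<^sup>+t. f (s + (-1) * t) \<partial>lborel)"
    using nn_integral_real_affine[OF fm, of "-1" s] by simp
  have k: "(\<integral>\<^sup>+t. f t \<partial>lborel) \<le> ennreal (2 * (L powr (1-1-1/2) * (1/(1-1/2) + 1/(1+1/2-1))))"
    unfolding f_def using key[OF L, of 1 "1/2"] by simp
  have "(1::real)-1-1/2 = -1/2" "1/(1-1/2) + 1/(1+1/2-1) = (4::real)" by simp_all
  then have k2: "(\<integral>\<^sup>+t. f (s + (-1) * t) \<partial>lborel) \<le> ennreal (2 * (L powr (-1/2) * 4))"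
    using k e by metis
  show ?thesis using k2 unfolding f_def by simp
qed



lemma nn_cmult_le:
  fixes h :: "real \<Rightarrow> real"
  assumes k: "0 \<le> k" and hm: "h \<in> borel_measurable borel"
    and I: "(\<integral>\<^sup>+t. ennreal (h t) \<partial>lborel) \<le> ennreal B" and B: "0 \<le> B"
  shows "(\<integral>\<^sup>+t. ennreal (k * h t) \<partial>lborel) \<le> ennreal (k * B)"
proof -
  have "(\<integral>\<^sup>+t. ennreal (k * h t) \<partial>lborel) = (\<integral>\<^sup>+t. ennreal k * ennreal (h t) \<partial>lborel)"
    using k by (simp add: ennreal_mult')
  also have "\<dots> = ennreal k * (\<integral>\<^sup>+t. ennreal (h t) \<partial>lborel)"
    using hm by (intro nn_integral_cmult) auto
  also have "\<dots> \<le> ennreal k * ennreal B" using I by (intro mult_left_mono) auto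
  also have "\<dots> = ennreal (k * B)" using k by (simp add: ennreal_mult')
  finally show ?thesis .
qed

lemma meas_slice:
  fixes k :: "real \<Rightarrow> real \<Rightarrow> complex"
  assumes "(\<lambda>(s,t). k s t) \<in> borel_measurable borel"
  shows "(\<lambda>t. k s t) \<in> borel_measurable borel"
proof -
  have "(\<lambda>t. (s, t)) \<in> borel_measurable borel"
    by (intro borel_measurable_continuous_onI continuous_intros)
  from measurable_compose[OF this assms] show ?thesis by simp
qed



theorem proposition2:
  fixes \<alpha> d \<epsilon> :: real
  assumes "0 < \<alpha>" and "\<alpha> < 1/2" and "0 < d" and "0 < \<epsilon>"
  shows "\<exists>M::real. \<forall>(kD :: real \<Rightarrow> real \<Rightarrow> complex) (kC :: real \<Rightarrow> real \<Rightarrow> complex)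
           (\<phi> :: real \<times> real \<Rightarrow> real) (m :: real) (\<sigma> :: real \<Rightarrow> complex) (\<tau> :: real \<Rightarrow> complex).
     0 \<le> m \<longrightarrow>
     (\<lambda>(s,t). kD s t) \<in> borel_measurable borel \<longrightarrow>
     (\<lambda>(s,t). kC s t) \<in> borel_measurable borel \<longrightarrow>
     continuous_on UNIV \<phi> \<longrightarrow>
     (\<forall>p. p \<notin> Bsq (d + 2*\<epsilon>) \<longrightarrow> \<phi> p = 0) \<longrightarrow>
     (\<forall>p \<in> Bsq (d + \<epsilon>). \<phi> p = 1) \<longrightarrow>
     (\<forall>s t. cmod (kD s t) \<le> m * (1 + \<bar>s\<bar> + \<bar>t\<bar>) powr (-1/2)) \<longrightarrow>
     (\<forall>s t. \<bar>1 - \<phi> (s,t)\<bar> * cmod (kC s t) \<le> m * (1 + \<bar>s\<bar> + \<bar>t\<bar>) powr (-3/2)) \<longrightarrow>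
     (\<forall>s t. \<bar>\<phi> (s,t)\<bar> * cmod (kC s t) \<le> m * (1 + \<bar>ln \<bar>s - t\<bar>\<bar>)) \<longrightarrow>
     \<sigma> \<in> Cw \<alpha> \<longrightarrow> \<tau> \<in> Cw (\<alpha> + 1/2) \<longrightarrow>
       bdd_above (range (\<lambda>s. (1 + \<bar>s\<bar>) powr \<alpha> * cmod (intop kD \<tau> s))) \<and>
       bdd_above (range (\<lambda>s. (1 + \<bar>s\<bar>) powr (\<alpha> + 1/2) * cmod (intop kC \<sigma> s))) \<and>
       wnorm \<alpha> (intop kD \<tau>) + wnorm (\<alpha> + 1/2) (intop kC \<sigma>)
         \<le> M * m * (wnorm (\<alpha> + 1/2) \<tau> + wnorm \<alpha> \<sigma>)"
proof -
  note al = assms(1,2)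
  define R where "R = d + 2*\<epsilon>"
  have R: "R > 0" using assms unfolding R_def by simp
  obtain c where c0: "c \<ge> 0"
    and cb: "\<And>u. 0 < u \<Longrightarrow> u \<le> 2*R \<Longrightarrow> 1 + \<bar>ln u\<bar> \<le> c * ((2*R + u) powr (-1) * u powr (-1/2))"
    using log_bound[of "2*R"] R by auto
  define KD where "KD = 2 * (1/(1-(\<alpha>+1/2)) + 1/(1/2+(\<alpha>+1/2)-1))"
  define KF where "KF = 2 * (1/(1-\<alpha>) + 1/(3/2+\<alpha>-1))"
  define KN where "KN = c * (2 * ((2*R) powr (-1/2) * 4))"
  have KD0: "KD \<ge> 0" using al unfolding KD_def by simp
  have KF0: "KF \<ge> 0" using al unfolding KF_def by simp
  have KN0: "KN \<ge> 0" using c0 unfolding KN_def by simp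
  define KC where "KC = KF + (1+R) powr (\<alpha>+1/2) * KN"
  have KC0: "KC \<ge> 0" using KF0 KN0 unfolding KC_def by simp
  show ?thesis
  proof (intro exI[of _ "KD + KC"] allI impI)
    fix kD kC :: "real \<Rightarrow> real \<Rightarrow> complex" and \<phi> :: "real \<times> real \<Rightarrow> real" and m :: real
      and \<sigma> \<tau> :: "real \<Rightarrow> complex"
    assume m: "0 \<le> m" and kDm: "(\<lambda>(s,t). kD s t) \<in> borel_measurable borel"
      and kCm: "(\<lambda>(s,t). kC s t) \<in> borel_measurable borel"
      and \<phi>c: "continuous_on UNIV \<phi>"
      and \<phi>0: "\<forall>p. p \<notin> Bsq (d + 2*\<epsilon>) \<longrightarrow> \<phi> p = 0"
      and \<phi>1: "\<forall>p \<in> Bsq (d + \<epsilon>). \<phi> p = 1"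
      and hD: "\<forall>s t. cmod (kD s t) \<le> m * (1 + \<bar>s\<bar> + \<bar>t\<bar>) powr (-1/2)"
      and hC1: "\<forall>s t. \<bar>1 - \<phi> (s,t)\<bar> * cmod (kC s t) \<le> m * (1 + \<bar>s\<bar> + \<bar>t\<bar>) powr (-3/2)"
      and hC2: "\<forall>s t. \<bar>\<phi> (s,t)\<bar> * cmod (kC s t) \<le> m * (1 + \<bar>ln \<bar>s - t\<bar>\<bar>)"
      and \<sigma>C: "\<sigma> \<in> Cw \<alpha>" and \<tau>C: "\<tau> \<in> Cw (\<alpha> + 1/2)"
    define T where "T = wnorm (\<alpha> + 1/2) \<tau>"
    define S where "S = wnorm \<alpha> \<sigma>"
    have Tb: "(1 + \<bar>t\<bar>) powr (\<alpha> + 1/2) * cmod (\<tau> t) \<le> T" for t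
      using \<tau>C unfolding Cw_def T_def wnorm_def by (auto intro: cSUP_upper)
    have Sb: "(1 + \<bar>t\<bar>) powr \<alpha> * cmod (\<sigma> t) \<le> S" for t
      using \<sigma>C unfolding Cw_def S_def wnorm_def by (auto intro: cSUP_upper)
    have T0: "0 \<le> T" using Tb[of 0] by (smt (verit) mult_nonneg_nonneg norm_ge_zero powr_ge_zero)
    have S0: "0 \<le> S" using Sb[of 0] by (smt (verit) mult_nonneg_nonneg norm_ge_zero powr_ge_zero)
    have wb: "cmod (f t) \<le> K * \<bar>t\<bar> powr (-\<gamma>)"
      if "(1 + \<bar>t\<bar>) powr \<gamma> * cmod (f t) \<le> K" "t \<noteq> 0" "\<gamma> \<ge> 0" for f :: "real \<Rightarrow> complex" and K \<gamma> t
    proof -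
      have p: "(1 + \<bar>t\<bar>) powr \<gamma> > 0" by simp
      have "cmod (f t) \<le> K / (1 + \<bar>t\<bar>) powr \<gamma>" using that(1) p by (simp add: field_simps)
      also have "\<dots> = K * (1 + \<bar>t\<bar>) powr (-\<gamma>)" by (simp add: powr_minus divide_inverse)
      also have "\<dots> \<le> K * \<bar>t\<bar> powr (-\<gamma>)"
      proof (rule mult_left_mono)
        show "(1 + \<bar>t\<bar>) powr (-\<gamma>) \<le> \<bar>t\<bar> powr (-\<gamma>)" using that by (intro powr_mono2') auto
        show "0 \<le> K" using that(1) by (smt (verit) mult_nonneg_nonneg norm_ge_zero powr_ge_zero)
      qed
      finally show ?thesis .
    qed
    have \<tau>b: "cmod (\<tau> t) \<le> T * \<bar>t\<bar> powr (-(\<alpha>+1/2))" if "t \<noteq> 0" for t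
      using wb[where f=\<tau>, OF Tb[of t] that] al by simp
    have \<sigma>b: "cmod (\<sigma> t) \<le> S * \<bar>t\<bar> powr (-\<alpha>)" if "t \<noteq> 0" for t
      using wb[where f=\<sigma>, OF Sb[of t] that] al by simp
    have \<sigma>b': "cmod (\<sigma> t) \<le> S" for t
    proof -
      have "1 \<le> (1 + \<bar>t\<bar>) powr \<alpha>" using al by (simp add: ge_one_powr_ge_zero)
      then have "cmod (\<sigma> t) \<le> (1 + \<bar>t\<bar>) powr \<alpha> * cmod (\<sigma> t)"
        using mult_right_mono[of 1 "(1 + \<bar>t\<bar>) powr \<alpha>" "cmod (\<sigma> t)"] by simp
      then show ?thesis using Sb[of t] by linarith
    qed
    have \<tau>m: "\<tau> \<in> borel_measurable borel" using \<tau>C unfolding Cw_def by (auto intro: borel_measurable_continuous_onI)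
    have \<sigma>m: "\<sigma> \<in> borel_measurable borel" using \<sigma>C unfolding Cw_def by (auto intro: borel_measurable_continuous_onI)
    have DP: "(1 + \<bar>s\<bar>) powr \<alpha> * cmod (intop kD \<tau> s) \<le> KD * m * T" for s
    proof -
      define a where "a = 1 + \<bar>s\<bar>"
      have a: "a > 0" unfolding a_def by simp
      define X where "X = 1/(1-(\<alpha>+1/2)) + 1/(1/2+(\<alpha>+1/2)-1)"
      have X0: "X \<ge> 0" using al unfolding X_def by simp
      have ex: "1-1/2-(\<alpha>+1/2) = -\<alpha>" by simp
      have I: "cmod (intop kD \<tau> s) \<le> m*T*(2*(a powr (-\<alpha>) * X))"
        unfolding intop_def
      proof (rule norm_int_le[where g="\<lambda>t. m*T*((a+\<bar>t\<bar>) powr (-(1/2)) * \<bar>t\<bar> powr (-(\<alpha>+1/2)))"])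
        have "(\<lambda>t. kD s t) \<in> borel_measurable borel" by (rule meas_slice[OF kDm])
        then show "(\<lambda>t. kD s t * \<tau> t) \<in> borel_measurable lborel"
          using \<tau>m by simp
        show "AE t in lborel. cmod (kD s t * \<tau> t) \<le> m*T*((a+\<bar>t\<bar>) powr (-(1/2)) * \<bar>t\<bar> powr (-(\<alpha>+1/2)))"
          using AE_lborel_singleton[of 0]
        proof eventually_elim
          case (elim t)
          have "cmod (kD s t) \<le> m * (a+\<bar>t\<bar>) powr (-(1/2))"
            using hD[rule_format, of s t] unfolding a_def by simp
          then have "cmod (kD s t) * cmod (\<tau> t) \<le> (m * (a+\<bar>t\<bar>) powr (-(1/2))) * (T * \<bar>t\<bar> powr (-(\<alpha>+1/2)))"
            using \<tau>b[OF elim] m T0 by (intro mult_mono) auto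
          then show ?case by (simp add: norm_mult ac_simps)
        qed
        have "(\<integral>\<^sup>+t. ennreal ((a+\<bar>t\<bar>) powr (-(1/2)) * \<bar>t\<bar> powr (-(\<alpha>+1/2))) \<partial>lborel)
            \<le> ennreal (2*(a powr (-\<alpha>) * X))"
          using key[of a "1/2" "\<alpha>+1/2"] a al unfolding X_def ex by simp
        then show "(\<integral>\<^sup>+t. ennreal (m*T*((a+\<bar>t\<bar>) powr (-(1/2)) * \<bar>t\<bar> powr (-(\<alpha>+1/2)))) \<partial>lborel)
            \<le> ennreal (m*T*(2*(a powr (-\<alpha>) * X)))"
          using m T0 X0 by (intro nn_cmult_le) auto
        show "0 \<le> m*T*(2*(a powr (-\<alpha>) * X))" using m T0 X0 by simp
      qed
      have "a powr \<alpha> * cmod (intop kD \<tau> s) \<le> a powr \<alpha> * (m*T*(2*(a powr (-\<alpha>) * X)))"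
        using I by (intro mult_left_mono) auto
      also have "\<dots> = m*T*(2*X) * (a powr \<alpha> * a powr (-\<alpha>))" by (simp add: ac_simps)
      also have "a powr \<alpha> * a powr (-\<alpha>) = 1" using a by (simp add: powr_add[symmetric])
      finally show ?thesis unfolding a_def KD_def X_def by (simp add: ac_simps)
    qed
    have CP: "(1 + \<bar>s\<bar>) powr (\<alpha> + 1/2) * cmod (intop kC \<sigma> s) \<le> KC * m * S" for s
    proof -
      define a where "a = 1 + \<bar>s\<bar>"
      have a: "a > 0" unfolding a_def by simp
      define X where "X = 1/(1-\<alpha>) + 1/(3/2+\<alpha>-1)"
      have X0: "X \<ge> 0" using al unfolding X_def by simp
      have ex: "1-3/2-\<alpha> = -(\<alpha>+1/2)" by simp
      define A' where "A' t = m * (a+\<bar>t\<bar>) powr (-(3/2))" for t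
      define B' where "B' t = (if \<bar>s\<bar> \<le> R then m*c*((2*R+\<bar>s-t\<bar>) powr (-1) * \<bar>s-t\<bar> powr (-1/2)) else 0)" for t
      have A'0: "A' t \<ge> 0" for t unfolding A'_def using m by simp
      have B'0: "B' t \<ge> 0" for t unfolding B'_def using m c0 by simp
      define g1 where "g1 t = m*S*((a+\<bar>t\<bar>) powr (-(3/2)) * \<bar>t\<bar> powr (-\<alpha>))" for t
      define g2 where "g2 t = (if \<bar>s\<bar> \<le> R then m*S*c*((2*R+\<bar>s-t\<bar>) powr (-1) * \<bar>s-t\<bar> powr (-1/2)) else 0)" for t
      define B1 where "B1 = m*S*(2*(a powr (-(\<alpha>+1/2)) * X))"
      define B2 where "B2 = (if \<bar>s\<bar> \<le> R then m*S*KN else 0)"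
      have B10: "B1 \<ge> 0" unfolding B1_def using m S0 X0 by simp
      have B20: "B2 \<ge> 0" unfolding B2_def using m S0 KN0 by simp
      have g10: "g1 t \<ge> 0" for t unfolding g1_def using m S0 by simp
      have g20: "g2 t \<ge> 0" for t unfolding g2_def using m S0 c0 by simp
      have I: "cmod (intop kC \<sigma> s) \<le> B1 + B2"
        unfolding intop_def
      proof (rule norm_int_le[where g="\<lambda>t. g1 t + g2 t"])
        have "(\<lambda>t. kC s t) \<in> borel_measurable borel" by (rule meas_slice[OF kCm])
        then show "(\<lambda>t. kC s t * \<sigma> t) \<in> borel_measurable lborel"
          using \<sigma>m by simp
        show "AE t in lborel. cmod (kC s t * \<sigma> t) \<le> g1 t + g2 t"
          using AE_lborel_singleton[of 0] AE_lborel_singleton[of s]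
        proof eventually_elim
          case (elim t)
          have tri: "cmod (kC s t) \<le> \<bar>1 - \<phi> (s,t)\<bar> * cmod (kC s t) + \<bar>\<phi> (s,t)\<bar> * cmod (kC s t)"
          proof -
            have "1 \<le> \<bar>1 - \<phi> (s,t)\<bar> + \<bar>\<phi> (s,t)\<bar>" by linarith
            then have "1 * cmod (kC s t) \<le> (\<bar>1 - \<phi> (s,t)\<bar> + \<bar>\<phi> (s,t)\<bar>) * cmod (kC s t)"
              by (intro mult_right_mono) auto
            then show ?thesis by (simp add: distrib_right)
          qed
          have hA: "\<bar>1 - \<phi> (s,t)\<bar> * cmod (kC s t) \<le> A' t"
            using hC1[rule_format, of s t] unfolding A'_def a_def by simp
          have hB: "\<bar>\<phi> (s,t)\<bar> * cmod (kC s t) \<le> B' t"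
          proof (cases "(s,t) \<in> Bsq R")
            case True
            then have st: "\<bar>s\<bar> \<le> R" "\<bar>t\<bar> \<le> R" unfolding Bsq_def by auto
            have u: "0 < \<bar>s - t\<bar>" "\<bar>s - t\<bar> \<le> 2*R" using elim st by auto
            have "\<bar>\<phi> (s,t)\<bar> * cmod (kC s t) \<le> m * (1 + \<bar>ln \<bar>s - t\<bar>\<bar>)"
              using hC2 by blast
            also have "\<dots> \<le> m * (c * ((2*R + \<bar>s-t\<bar>) powr (-1) * \<bar>s-t\<bar> powr (-1/2)))"
              using cb[OF u] m by (intro mult_left_mono) auto
            finally show ?thesis unfolding B'_def using st by (simp add: ac_simps)
          next
            case False
            then have "\<phi> (s,t) = 0" using \<phi>0 unfolding R_def by blast
            then show ?thesis using B'0[of t] by simp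
          qed
          have "cmod (kC s t * \<sigma> t) = cmod (kC s t) * cmod (\<sigma> t)" by (simp add: norm_mult)
          also have "\<dots> \<le> (A' t + B' t) * cmod (\<sigma> t)"
            using tri hA hB by (intro mult_right_mono) auto
          also have "\<dots> = A' t * cmod (\<sigma> t) + B' t * cmod (\<sigma> t)" by (simp add: distrib_right)
          also have "\<dots> \<le> A' t * (S * \<bar>t\<bar> powr (-\<alpha>)) + B' t * S"
            using \<sigma>b[OF elim(1)] \<sigma>b'[of t] A'0[of t] B'0[of t] by (intro add_mono mult_left_mono) auto
          also have "\<dots> = g1 t + g2 t" unfolding A'_def B'_def g1_def g2_def by (simp add: ac_simps)
          finally show ?case .
        qed
        have g1m: "g1 \<in> borel_measurable borel" unfolding g1_def[abs_def] by measurable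
        have g2m: "g2 \<in> borel_measurable borel" unfolding g2_def[abs_def] by measurable
        have m1: "(\<lambda>t. (a+\<bar>t\<bar>) powr (-(3/2)) * \<bar>t\<bar> powr (-\<alpha>)) \<in> borel_measurable borel" by measurable
        have m2: "(\<lambda>t. (2*R+\<bar>s-t\<bar>) powr (-1) * \<bar>s-t\<bar> powr (-1/2)) \<in> borel_measurable borel" by measurable
        have "(\<integral>\<^sup>+t. ennreal ((a+\<bar>t\<bar>) powr (-(3/2)) * \<bar>t\<bar> powr (-\<alpha>)) \<partial>lborel)
            \<le> ennreal (2*(a powr (-(\<alpha>+1/2)) * X))"
          using key[of a "3/2" "\<alpha>"] a al unfolding X_def ex by simp
        then have i1: "(\<integral>\<^sup>+t. ennreal (g1 t) \<partial>lborel) \<le> ennreal B1"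
          unfolding g1_def B1_def using m S0 X0 m1 by (intro nn_cmult_le) auto
        have i2: "(\<integral>\<^sup>+t. ennreal (g2 t) \<partial>lborel) \<le> ennreal B2"
        proof (cases "\<bar>s\<bar> \<le> R")
          case True
          have "(\<integral>\<^sup>+t. ennreal (m*S*c*((2*R+\<bar>s-t\<bar>) powr (-1) * \<bar>s-t\<bar> powr (-1/2))) \<partial>lborel)
              \<le> ennreal (m*S*c*(2 * ((2*R) powr (-1/2) * 4)))"
            using near_int[of "2*R" s] R m S0 c0 m2 by (intro nn_cmult_le) auto
          then show ?thesis unfolding g2_def B2_def KN_def using True by (simp add: ac_simps)
        next
          case False
          then show ?thesis unfolding g2_def B2_def by simp
        qed
        have "(\<integral>\<^sup>+t. ennreal (g1 t + g2 t) \<partial>lborel) = (\<integral>\<^sup>+t. ennreal (g1 t) + ennreal (g2 t) \<partial>lborel)"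
          using g10 g20 by (simp add: ennreal_plus)
        also have "\<dots> = (\<integral>\<^sup>+t. ennreal (g1 t) \<partial>lborel) + (\<integral>\<^sup>+t. ennreal (g2 t) \<partial>lborel)"
          using g1m g2m by (intro nn_integral_add) auto
        also have "\<dots> \<le> ennreal B1 + ennreal B2" using i1 i2 by (rule add_mono)
        also have "\<dots> = ennreal (B1 + B2)" using B10 B20 by (simp add: ennreal_plus)
        finally show "(\<integral>\<^sup>+t. ennreal (g1 t + g2 t) \<partial>lborel) \<le> ennreal (B1 + B2)" .
        show "0 \<le> B1 + B2" using B10 B20 by simp
      qed
      have f0: "a powr (\<alpha>+1/2) * cmod (intop kC \<sigma> s) \<le> a powr (\<alpha>+1/2) * (B1 + B2)"
        using I by (intro mult_left_mono) auto
      have f1: "a powr (\<alpha>+1/2) * (B1 + B2) = a powr (\<alpha>+1/2) * B1 + a powr (\<alpha>+1/2) * B2" by (simp add: distrib_left)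
      have f2: "a powr (\<alpha>+1/2) * B1 = m*S*KF"
      proof -
        have "a powr (\<alpha>+1/2) * a powr (-(\<alpha>+1/2)) = 1" using a by (simp add: powr_add[symmetric])
        moreover have "a powr (\<alpha>+1/2) * B1 = (m*S*(2*X)) * (a powr (\<alpha>+1/2) * a powr (-(\<alpha>+1/2)))"
          unfolding B1_def by (simp only: mult_ac)
        moreover have KX: "KF = 2*X" unfolding KF_def X_def by (rule refl)
        ultimately show ?thesis by simp
      qed
      have f3: "a powr (\<alpha>+1/2) * B2 \<le> (1+R) powr (\<alpha>+1/2) * (m*S*KN)"
      proof (cases "\<bar>s\<bar> \<le> R")
        case True
        have "a powr (\<alpha>+1/2) \<le> (1+R) powr (\<alpha>+1/2)" using True al unfolding a_def by (intro powr_mono2) auto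
        moreover have "B2 = m*S*KN" using True unfolding B2_def by simp
        ultimately show ?thesis using m S0 KN0 by (simp add: mult_right_mono)
      next
        case False
        then show ?thesis unfolding B2_def using m S0 KN0 by simp
      qed
      have fin: "a powr (\<alpha> + 1/2) * cmod (intop kC \<sigma> s) \<le> m*S*KF + (1+R) powr (\<alpha>+1/2) * (m*S*KN)" using f0 f1 f2 f3 by linarith
      have "KC*m*S = KF*m*S + (1+R) powr (\<alpha>+1/2) * KN * m * S" by (simp add: KC_def distrib_right)
      also have "\<dots> = m*S*KF + (1+R) powr (\<alpha>+1/2) * (m*S*KN)" by (simp only: mult_ac)
      finally show ?thesis using fin unfolding a_def by linarith
    qed
    have b1: "bdd_above (range (\<lambda>s. (1 + \<bar>s\<bar>) powr \<alpha> * cmod (intop kD \<tau> s)))"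
      using DP by (intro bdd_aboveI2) 
    have b2: "bdd_above (range (\<lambda>s. (1 + \<bar>s\<bar>) powr (\<alpha> + 1/2) * cmod (intop kC \<sigma> s)))"
      using CP by (intro bdd_aboveI2)
    have w1: "wnorm \<alpha> (intop kD \<tau>) \<le> KD * m * T"
      unfolding wnorm_def using DP by (intro cSUP_least) auto
    have w2: "wnorm (\<alpha> + 1/2) (intop kC \<sigma>) \<le> KC * m * S"
      unfolding wnorm_def using CP by (intro cSUP_least) auto
    have "KD * m * T \<le> (KD + KC) * m * T" using KC0 m T0 by (simp add: mult_nonneg_nonneg distrib_right)
    moreover have "KC * m * S \<le> (KD + KC) * m * S" using KD0 m S0 by (simp add: mult_nonneg_nonneg distrib_right)
    ultimately have "wnorm \<alpha> (intop kD \<tau>) + wnorm (\<alpha> + 1/2) (intop kC \<sigma>) \<le> (KD + KC) * m * (T + S)"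
      using w1 w2 by (simp add: distrib_left)
    then show "bdd_above (range (\<lambda>s. (1 + \<bar>s\<bar>) powr \<alpha> * cmod (intop kD \<tau> s))) \<and>
       bdd_above (range (\<lambda>s. (1 + \<bar>s\<bar>) powr (\<alpha> + 1/2) * cmod (intop kC \<sigma> s))) \<and>
       wnorm \<alpha> (intop kD \<tau>) + wnorm (\<alpha> + 1/2) (intop kC \<sigma>)
         \<le> (KD + KC) * m * (wnorm (\<alpha> + 1/2) \<tau> + wnorm \<alpha> \<sigma>)"
      using b1 b2 unfolding T_def S_def by simp
  qed
qed

end
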